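(* Let $m>1$ and let $T$ be a regular tournament matrix of order $m$. Put $N=T\otimes J_2+I_{2m}$. Let $H$ be a regular graph of order $2m$ with vertex set $X$, having an automorphism $\rho$ that is a fixed-point-free involution, such that the orbits of the full automorphism group of $H$ on $X$ are exactly the orbits of $\rho$. Let $B$ be the adjacency matrix of $H$, with vertices indexed so that $\rho$ is represented by the permutation matrix $R=I_m\otimes(J_2-I_2)$. Let $G$ be the graph on the disjoint union of two copies $X_1,X_2$ of $X$ with adjacency matrix \[ A=\begin{bmatrix} B & N\\ N^{\top} & B\end{bmatrix} \] (the first block row/column indexed by $X_1$, the second by $X_2$). Then $X_1$ is a Godsil-McKay switching set of $G$, the graph $G'$ obtained by Godsil-McKay switching with respect to $X_1$ is isomorphic to $G$, and there is no isomorphism from $G$ to $G'$ that maps $X_1$ onto itself.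
   Context: A $(0,1)$-matrix $T$ of order $m$ is a tournament matrix if $T+T^{\top}=J-I$; it is regular if all its row sums are equal. $J_2$ is the $2\times 2$ all-ones matrix, $I_k$ the $k\times k$ identity, and $\otimes$ the Kronecker product. A subset $X$ of the vertex set of a graph $G$ is a (Godsil-McKay) switching set if $X$ induces a regular subgraph of $G$ and every vertex outside $X$ has either $0$, $\tfrac12|X|$ or $|X|$ neighbours in $X$. Godsil-McKay switching with respect to $X$ produces the graph $G'$ on the same vertex set obtained as follows: for each vertex $x\notin X$ having exactly $\tfrac12|X|$ neighbours in $X$, delete the edges from $x$ to these neighbours and join $x$ instead to the other $\tfrac12|X|$ vertices of $X$; all other adjacencies are unchanged. *)

theory Defs
  imports Main
begin

text \<open>Square matrices of order n are represented as functions nat \<Rightarrow> nat \<Rightarrow> int,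
  indices 0..<n. Only entries with indices below the order are meaningful.\<close>

definition all_ones :: "nat \<Rightarrow> nat \<Rightarrow> int" where
  "all_ones i j = 1"

definition id_mat :: "nat \<Rightarrow> nat \<Rightarrow> int" where
  "id_mat i j = (if i = j then 1 else 0)"

definition kron :: "nat \<Rightarrow> (nat \<Rightarrow> nat \<Rightarrow> int) \<Rightarrow> (nat \<Rightarrow> nat \<Rightarrow> int) \<Rightarrow> nat \<Rightarrow> nat \<Rightarrow> int" where
  "kron k A B i j = A (i div k) (j div k) * B (i mod k) (j mod k)"

definition tournament_matrix :: "nat \<Rightarrow> (nat \<Rightarrow> nat \<Rightarrow> int) \<Rightarrow> bool" where
  "tournament_matrix m T \<longleftrightarrow>
     (\<forall>i<m. \<forall>j<m. T i j \<in> {0, 1}) \<and>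
     (\<forall>i<m. \<forall>j<m. T i j + T j i = all_ones i j - id_mat i j)"

definition regular_matrix :: "nat \<Rightarrow> (nat \<Rightarrow> nat \<Rightarrow> int) \<Rightarrow> bool" where
  "regular_matrix m T \<longleftrightarrow> (\<exists>r. \<forall>i<m. (\<Sum>j<m. T i j) = r)"

definition adjacency_matrix :: "nat \<Rightarrow> (nat \<Rightarrow> nat \<Rightarrow> int) \<Rightarrow> bool" where
  "adjacency_matrix n B \<longleftrightarrow>
     (\<forall>i<n. \<forall>j<n. B i j \<in> {0, 1}) \<and> (\<forall>i<n. \<forall>j<n. B i j = B j i) \<and> (\<forall>i<n. B i i = 0)"

definition mat_graph :: "(nat \<Rightarrow> nat \<Rightarrow> int) \<Rightarrow> nat \<Rightarrow> nat \<Rightarrow> bool" where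
  "mat_graph A u v \<longleftrightarrow> A u v = 1"

definition regular_graph :: "'a set \<Rightarrow> ('a \<Rightarrow> 'a \<Rightarrow> bool) \<Rightarrow> bool" where
  "regular_graph V E \<longleftrightarrow> (\<exists>k. \<forall>x\<in>V. card {y\<in>V. E x y} = k)"

definition graph_iso :: "'a set \<Rightarrow> ('a \<Rightarrow> 'a \<Rightarrow> bool) \<Rightarrow> 'b set \<Rightarrow> ('b \<Rightarrow> 'b \<Rightarrow> bool) \<Rightarrow> ('a \<Rightarrow> 'b) \<Rightarrow> bool" where
  "graph_iso V E V' E' f \<longleftrightarrow> bij_betw f V V' \<and> (\<forall>u\<in>V. \<forall>v\<in>V. E u v \<longleftrightarrow> E' (f u) (f v))"

definition graph_aut :: "'a set \<Rightarrow> ('a \<Rightarrow> 'a \<Rightarrow> bool) \<Rightarrow> ('a \<Rightarrow> 'a) \<Rightarrow> bool" where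
  "graph_aut V E f \<longleftrightarrow> graph_iso V E V E f"

definition gm_switching_set :: "'a set \<Rightarrow> ('a \<Rightarrow> 'a \<Rightarrow> bool) \<Rightarrow> 'a set \<Rightarrow> bool" where
  "gm_switching_set V E X \<longleftrightarrow> X \<subseteq> V \<and> regular_graph X E \<and>
     (\<forall>v\<in>V - X. card {y\<in>X. E v y} = 0 \<or> 2 * card {y\<in>X. E v y} = card X
                 \<or> card {y\<in>X. E v y} = card X)"

definition gm_switch :: "'a set \<Rightarrow> ('a \<Rightarrow> 'a \<Rightarrow> bool) \<Rightarrow> 'a set \<Rightarrow> 'a \<Rightarrow> 'a \<Rightarrow> bool" where
  "gm_switch V E X u v =
     (if u \<in> V - X \<and> v \<in> X \<and> 2 * card {y\<in>X. E u y} = card X then \<not> E u v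
      else if v \<in> V - X \<and> u \<in> X \<and> 2 * card {y\<in>X. E v y} = card X then \<not> E u v
      else E u v)"

definition block_mat :: "nat \<Rightarrow> (nat \<Rightarrow> nat \<Rightarrow> int) \<Rightarrow> (nat \<Rightarrow> nat \<Rightarrow> int) \<Rightarrow>
    (nat \<Rightarrow> nat \<Rightarrow> int) \<Rightarrow> (nat \<Rightarrow> nat \<Rightarrow> int) \<Rightarrow> nat \<Rightarrow> nat \<Rightarrow> int" where
  "block_mat n P Q Q' S i j =
     (if i < n then (if j < n then P i j else Q i (j - n))
      else (if j < n then Q' (i - n) j else S (i - n) (j - n)))"

definition transp_mat :: "(nat \<Rightarrow> nat \<Rightarrow> int) \<Rightarrow> nat \<Rightarrow> nat \<Rightarrow> int" where
  "transp_mat A i j = A j i"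

end

theory Submission
  imports Defs
begin

lemma sum_div2: "(\<Sum>y<2*(n::nat). g (y div 2)) = 2 * (\<Sum>k<n. (g k::int))"
proof (induction n)
  case 0 then show ?case by simp
next
  case (Suc n)
  have e: "2*Suc n = Suc (Suc (2*n))" by simp
  show ?case unfolding e using Suc by (simp add: algebra_simps)
qed

lemma card_filter_int: "finite S \<Longrightarrow> int (card {y\<in>S. P y}) = (\<Sum>y\<in>S. if P y then 1 else 0)"
  by (simp add: sum.If_cases Int_def conj_commute)

lemma tour_diag: "tournament_matrix m T \<Longrightarrow> i<m \<Longrightarrow> T i i = 0"
  unfolding tournament_matrix_def all_ones_def id_mat_def by force

lemma tour_off: "tournament_matrix m T \<Longrightarrow> i<m \<Longrightarrow> j<m \<Longrightarrow> i\<noteq>j \<Longrightarrow> T j i = 1 - T i j"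
  unfolding tournament_matrix_def all_ones_def id_mat_def by force

lemma tour_01: "tournament_matrix m T \<Longrightarrow> i<m \<Longrightarrow> j<m \<Longrightarrow> T i j = 0 \<or> T i j = 1"
  unfolding tournament_matrix_def by force

lemma col_sum:
  assumes tt: "tournament_matrix m T" and rr: "regular_matrix m T" and c: "c<m"
  shows "2*(\<Sum>k<m. T k c) = int m - 1"
proof -
  obtain r where r: "\<forall>i<m. (\<Sum>j<m. T i j) = r" using rr unfolding regular_matrix_def by blast
  have idsum: "\<And>i. i<m \<Longrightarrow> (\<Sum>j<m. id_mat i j) = 1"
    by (simp add: id_mat_def)
  have row: "\<And>i. i<m \<Longrightarrow> (\<Sum>j<m. T i j + T j i) = int m - 1"
  proof -
    fix i assume i: "i<m"
    have "(\<Sum>j<m. T i j + T j i) = (\<Sum>j<m. all_ones i j - id_mat i j)"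
      using tt unfolding tournament_matrix_def using i by (intro sum.cong) auto
    also have "\<dots> = int m - 1" using idsum[OF i] by (simp add: sum_subtractf all_ones_def)
    finally show "(\<Sum>j<m. T i j + T j i) = int m - 1" .
  qed
  have tot1: "(\<Sum>i<m. \<Sum>j<m. T i j + T j i) = int m * (int m - 1)"
    using row by simp
  have tot2: "(\<Sum>i<m. \<Sum>j<m. T i j + T j i) = 2 * (int m * r)"
  proof -
    have "(\<Sum>i<m. \<Sum>j<m. T i j + T j i) = (\<Sum>i<m. \<Sum>j<m. T i j) + (\<Sum>i<m. \<Sum>j<m. T j i)"
      by (simp add: sum.distrib)
    also have "(\<Sum>i<m. \<Sum>j<m. T j i) = (\<Sum>i<m. \<Sum>j<m. T i j)" by (rule sum.swap)
    also have "(\<Sum>i<m. \<Sum>j<m. T i j) = int m * r" using r by simp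
    finally show ?thesis by simp
  qed
  have m0: "int m > 0" using c by simp
  have r2: "2*r = int m - 1"
    using tot1 tot2 m0 by (metis mult.left_commute mult_cancel_left less_irrefl)
  have "(\<Sum>k<m. T k c) = (\<Sum>k<m. all_ones c k - id_mat c k - T c k)"
    using tt c unfolding tournament_matrix_def by (intro sum.cong) (auto simp: algebra_simps)
  also have "\<dots> = int m - 1 - r" using idsum[OF c] r c by (simp add: sum_subtractf all_ones_def)
  finally show ?thesis using r2 by simp
qed

lemma count_N:
  assumes tt: "tournament_matrix m T" and rr: "regular_matrix m T" and b: "b < 2*m"
  shows "card {y\<in>{0..<2*m}. kron 2 T all_ones y b + id_mat y b = 1} = m"
proof -
  let ?N = "\<lambda>y. T (y div 2) (b div 2) + (if y = b then 1 else 0)"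
  have Ne: "\<And>y. kron 2 T all_ones y b + id_mat y b = ?N y"
    by (simp add: kron_def all_ones_def id_mat_def)
  have bm: "b div 2 < m" using b by simp
  have N01: "\<And>y. y < 2*m \<Longrightarrow> (if ?N y = 1 then 1 else 0) = ?N y"
  proof -
    fix y assume y: "y<2*m"
    hence ym: "y div 2 < m" by simp
    show "(if ?N y = 1 then 1 else 0) = ?N y"
    proof (cases "y = b")
      case True then show ?thesis using tour_diag[OF tt bm] by simp
    next
      case False then show ?thesis using tour_01[OF tt ym bm] by auto
    qed
  qed
  have "int (card {y\<in>{0..<2*m}. kron 2 T all_ones y b + id_mat y b = 1})
      = (\<Sum>y<2*m. if ?N y = 1 then 1 else 0)"
    unfolding Ne atLeast0LessThan by (rule card_filter_int) simp
  also have "\<dots> = (\<Sum>y<2*m. ?N y)" using N01 by (intro sum.cong) auto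
  also have "\<dots> = (\<Sum>y<2*m. T (y div 2) (b div 2)) + 1"
    using b by (simp add: sum.distrib)
  also have "\<dots> = 2*(\<Sum>k<m. T k (b div 2)) + 1" using sum_div2[of "\<lambda>k. T k (b div 2)" m] by simp
  also have "\<dots> = int m" using col_sum[OF tt rr bm] by simp
  finally show ?thesis by simp
qed

lemma blk: assumes "a div 2 = c div 2" "b div 2 = c div 2" "b \<noteq> c" shows "a = c \<or> a = (b::nat)"
proof -
  have "a = 2*(a div 2) + a mod 2" "b = 2*(b div 2) + b mod 2" "c = 2*(c div 2) + c mod 2" by simp_all
  moreover have "a mod 2 < 2" "b mod 2 < 2" "c mod 2 < 2" by simp_all
  ultimately show ?thesis using assms by linarith
qed

theorem proposition3p1:
  fixes m :: nat and T B :: "nat \<Rightarrow> nat \<Rightarrow> int" and \<rho> :: "nat \<Rightarrow> nat"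
  assumes m_gt: "1 < m"
    and T_tour: "tournament_matrix m T" and T_reg: "regular_matrix m T"
    and B_adj: "adjacency_matrix (2*m) B"
    and H_reg: "regular_graph {0..<2*m} (mat_graph B)"
    and \<rho>_aut: "graph_aut {0..<2*m} (mat_graph B) \<rho>"
    and \<rho>_inv: "\<forall>x<2*m. \<rho> (\<rho> x) = x"
    and \<rho>_fpf: "\<forall>x<2*m. \<rho> x \<noteq> x"
    and orbits: "\<forall>x<2*m. \<forall>y<2*m.
        (\<exists>\<sigma>. graph_aut {0..<2*m} (mat_graph B) \<sigma> \<and> \<sigma> x = y) \<longleftrightarrow> (y = x \<or> y = \<rho> x)"
    and \<rho>_R: "\<forall>i<2*m. \<forall>j<2*m.
        kron 2 id_mat (\<lambda>i j. all_ones i j - id_mat i j) i j = (if \<rho> i = j then 1 else 0)"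
  shows
    "let N = (\<lambda>i j. kron 2 T all_ones i j + id_mat i j);
         A = block_mat (2*m) B N (transp_mat N) B;
         V = {0..<4*m}; X1 = {0..<2*m};
         E = mat_graph A; E' = gm_switch V E X1
     in gm_switching_set V E X1
        \<and> (\<exists>f. graph_iso V E V E' f)
        \<and> \<not> (\<exists>f. graph_iso V E V E' f \<and> f ` X1 = X1)"
proof -
  define N where "N = (\<lambda>i j. kron 2 T all_ones i j + id_mat i j)"
  define A where "A = block_mat (2*m) B N (transp_mat N) B"
  define V where "V = {0..<4*m}"
  define X1 where "X1 = {0..<2*m}"
  define E where "E = mat_graph A"
  define E' where "E' = gm_switch V E X1"
  have Nval: "\<And>i j. N i j = T (i div 2) (j div 2) + (if i = j then 1 else 0)"
    by (simp add: N_def kron_def all_ones_def id_mat_def)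
  have E11: "\<And>u v. u < 2*m \<Longrightarrow> v < 2*m \<Longrightarrow> E u v \<longleftrightarrow> B u v = 1"
    by (simp add: E_def A_def mat_graph_def block_mat_def)
  have E22: "\<And>u v. u < 2*m \<Longrightarrow> v < 2*m \<Longrightarrow> E (u+2*m) (v+2*m) \<longleftrightarrow> B u v = 1"
    by (simp add: E_def A_def mat_graph_def block_mat_def)
  have E12: "\<And>u v. u < 2*m \<Longrightarrow> v < 2*m \<Longrightarrow> E u (v+2*m) \<longleftrightarrow> N u v = 1"
    by (simp add: E_def A_def mat_graph_def block_mat_def)
  have E21: "\<And>u v. u < 2*m \<Longrightarrow> v < 2*m \<Longrightarrow> E (v+2*m) u \<longleftrightarrow> N u v = 1"
    by (simp add: E_def A_def mat_graph_def block_mat_def transp_mat_def)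
  have cardX1: "card X1 = 2*m" by (simp add: X1_def)
  have cnt: "\<And>v. v<2*m \<Longrightarrow> card {y\<in>X1. E (v+2*m) y} = m"
  proof -
    fix v assume v: "v<2*m"
    have "{y\<in>X1. E (v+2*m) y} = {y\<in>{0..<2*m}. kron 2 T all_ones y v + id_mat y v = 1}"
      using E21 v by (auto simp: X1_def N_def)
    thus "card {y\<in>X1. E (v+2*m) y} = m" using count_N[OF T_tour T_reg v] by simp
  qed
  have cntV: "\<And>v. v\<in>V - X1 \<Longrightarrow> 2*card {y\<in>X1. E v y} = card X1"
  proof -
    fix v assume "v \<in> V - X1"
    hence v: "v - 2*m < 2*m" "v = (v - 2*m) + 2*m" by (auto simp: V_def X1_def)
    show "2*card {y\<in>X1. E v y} = card X1" using cnt[OF v(1)] v(2) cardX1 by metis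
  qed
  have sw: "\<And>u v. u\<in>V \<Longrightarrow> v\<in>V \<Longrightarrow> E' u v = (if (u < 2*m) \<noteq> (v < 2*m) then \<not> E u v else E u v)"
  proof -
    fix u v assume uv: "u\<in>V" "v\<in>V"
    show "E' u v = (if (u < 2*m) \<noteq> (v < 2*m) then \<not> E u v else E u v)"
      unfolding E'_def gm_switch_def using uv cntV by (auto simp: X1_def V_def)
  qed
  have rho_bij: "bij_betw \<rho> X1 X1" using \<rho>_aut unfolding graph_aut_def graph_iso_def X1_def by (rule conjunct1)
  have rho_lt: "\<And>x. x<2*m \<Longrightarrow> \<rho> x < 2*m"
    using bij_betw_apply[OF rho_bij] by (auto simp: X1_def)
  have rho_div: "\<And>x. x<2*m \<Longrightarrow> \<rho> x div 2 = x div 2"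
  proof -
    fix x assume x: "x<2*m"
    have "kron 2 id_mat (\<lambda>i j. all_ones i j - id_mat i j) x (\<rho> x) = 1"
      using \<rho>_R x rho_lt[OF x] by simp
    thus "\<rho> x div 2 = x div 2" by (auto simp: kron_def id_mat_def split: if_splits)
  qed
  have aut: "\<And>u v. u<2*m \<Longrightarrow> v<2*m \<Longrightarrow> B (\<rho> u) (\<rho> v) = 1 \<longleftrightarrow> B u v = 1"
  proof -
    fix u v assume "u<2*m" "v<2*m"
    hence "mat_graph B u v = mat_graph B (\<rho> u) (\<rho> v)"
      using \<rho>_aut unfolding graph_aut_def graph_iso_def by (meson atLeastLessThan_iff zero_le)
    thus "B (\<rho> u) (\<rho> v) = 1 \<longleftrightarrow> B u v = 1" unfolding mat_graph_def by blast
  qed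
  have key: "\<And>u w. u<2*m \<Longrightarrow> w<2*m \<Longrightarrow> (N u w = 1) \<longleftrightarrow> \<not> (N (\<rho> w) u = 1)"
  proof -
    fix u w assume u: "u<2*m" and w: "w<2*m"
    have rd: "\<rho> w div 2 = w div 2" using rho_div[OF w] .
    have rf: "\<rho> w \<noteq> w" using \<rho>_fpf w by simp
    have um: "u div 2 < m" and wm: "w div 2 < m" using u w by auto
    show "(N u w = 1) \<longleftrightarrow> \<not> (N (\<rho> w) u = 1)"
    proof (cases "u div 2 = w div 2")
      case True
      have d: "T (w div 2) (w div 2) = 0" using tour_diag[OF T_tour wm] .
      have "u = w \<or> u = \<rho> w" using blk[OF True rd rf] .
      moreover have "\<not> (u = w \<and> u = \<rho> w)" using rf by auto
      ultimately show ?thesis using True rd d by (auto simp: Nval)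
    next
      case False
      have ne: "u \<noteq> w" "\<rho> w \<noteq> u" using False rd by auto
      have "T (w div 2) (u div 2) = 1 - T (u div 2) (w div 2)"
        using tour_off[OF T_tour um wm False] .
      moreover have "T (u div 2) (w div 2) = 0 \<or> T (u div 2) (w div 2) = 1"
        using tour_01[OF T_tour um wm] .
      ultimately show ?thesis using ne rd by (auto simp: Nval)
    qed
  qed
  have part1: "gm_switching_set V E X1"
  proof -
    obtain k where k: "\<forall>x\<in>{0..<2*m}. card {y\<in>{0..<2*m}. mat_graph B x y} = k"
      using H_reg unfolding regular_graph_def by blast
    have "\<forall>x\<in>X1. card {y\<in>X1. E x y} = k"
    proof
      fix x assume x: "x\<in>X1"
      have "{y\<in>X1. E x y} = {y\<in>{0..<2*m}. mat_graph B x y}"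
        using x E11 by (auto simp: X1_def mat_graph_def)
      thus "card {y\<in>X1. E x y} = k" using k x by (simp add: X1_def)
    qed
    hence "regular_graph X1 E" unfolding regular_graph_def by blast
    moreover have "X1 \<subseteq> V" by (auto simp: X1_def V_def)
    ultimately show ?thesis unfolding gm_switching_set_def using cntV by blast
  qed
  define f where "f = (\<lambda>x. if x < 2*m then x + 2*m else \<rho> (x - 2*m))"
  define g where "g = (\<lambda>y. if y < 2*m then \<rho> y + 2*m else y - 2*m)"
  have rl4: "\<And>x. x<4*m \<Longrightarrow> \<not> x<2*m \<Longrightarrow> \<rho> (x-2*m) < 2*m"
  proof -
    fix x assume "x<4*m" "\<not> x<2*m"
    hence "x - 2*m < 2*m" by arith
    thus "\<rho> (x-2*m) < 2*m" by (rule rho_lt)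
  qed
  have rl4b: "\<And>x. x<4*m \<Longrightarrow> \<not> x<2*m \<Longrightarrow> \<rho> (x-2*m) < 4*m"
    using rl4 by fastforce
  have part2: "graph_iso V E V E' f"
    unfolding graph_iso_def
  proof
    show "bij_betw f V V"
    proof (rule bij_betw_byWitness[where f'=g])
      show "\<forall>a\<in>V. g (f a) = a" using \<rho>_inv rho_lt rl4 by (auto simp: f_def g_def V_def)
      show "\<forall>a\<in>V. f (g a) = a" using \<rho>_inv rho_lt rl4 by (auto simp: f_def g_def V_def)
      show "f ` V \<subseteq> V" using rl4 rl4b by (auto simp: f_def V_def)
      show "g ` V \<subseteq> V" using rho_lt by (auto simp: g_def V_def)
    qed
    show "\<forall>u\<in>V. \<forall>v\<in>V. E u v = E' (f u) (f v)"
    proof (intro ballI)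
      fix u v assume uV: "u\<in>V" and vV: "v\<in>V"
      have fV: "\<And>x. x \<in> V \<Longrightarrow> f x \<in> V" using rl4 rl4b by (auto simp: f_def V_def)
      consider (a) "u<2*m" "v<2*m" | (b) "u<2*m" "\<not> v<2*m" | (c) "\<not> u<2*m" "v<2*m"
        | (d) "\<not> u<2*m" "\<not> v<2*m" by blast
      then show "E u v = E' (f u) (f v)"
      proof cases
        case a
        then show ?thesis using sw[OF fV[OF uV] fV[OF vV]] E11 E22 by (simp add: f_def)
      next
        case b
        define v' where "v' = v - 2*m"
        have v': "v' < 2*m" "v = v' + 2*m" using b vV by (auto simp: v'_def V_def)
        have "E' (f u) (f v) = (\<not> E (u+2*m) (\<rho> v'))"
          using sw[OF fV[OF uV] fV[OF vV]] b v' rho_lt[OF v'(1)] by (simp add: f_def)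
        also have "\<dots> = (\<not> N (\<rho> v') u = 1)" using E21 rho_lt[OF v'(1)] b by simp
        also have "\<dots> = E u v" using key[OF b(1) v'(1)] E12[OF b(1) v'(1)] v'(2) by simp
        finally show ?thesis by simp
      next
        case c
        define u' where "u' = u - 2*m"
        have u': "u' < 2*m" "u = u' + 2*m" using c uV by (auto simp: u'_def V_def)
        have "E' (f u) (f v) = (\<not> E (\<rho> u') (v+2*m))"
          using sw[OF fV[OF uV] fV[OF vV]] c u' rho_lt[OF u'(1)] by (simp add: f_def)
        also have "\<dots> = (\<not> N (\<rho> u') v = 1)" using E12 rho_lt[OF u'(1)] c by simp
        also have "\<dots> = E u v" using key[OF c(2) u'(1)] E21[OF c(2) u'(1)] u'(2) by simp
        finally show ?thesis by simp
      next
        case d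
        define u' where "u' = u - 2*m"
        have u': "u' < 2*m" "u = u' + 2*m" using d uV by (auto simp: u'_def V_def)
        define v' where "v' = v - 2*m"
        have v': "v' < 2*m" "v = v' + 2*m" using d vV by (auto simp: v'_def V_def)
        have "E' (f u) (f v) = E (\<rho> u') (\<rho> v')"
          using sw[OF fV[OF uV] fV[OF vV]] d u' v' rho_lt[OF u'(1)] rho_lt[OF v'(1)] by (simp add: f_def)
        also have "\<dots> = (B u' v' = 1)" using E11 rho_lt u' v' aut by simp
        also have "\<dots> = E u v" using E22[OF u'(1) v'(1)] u'(2) v'(2) by simp
        finally show ?thesis by simp
      qed
    qed
  qed
  have part3: "\<not> (\<exists>f. graph_iso V E V E' f \<and> f ` X1 = X1)"
  proof
    assume "\<exists>f. graph_iso V E V E' f \<and> f ` X1 = X1"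
    then obtain h where hiso: "graph_iso V E V E' h" and hX: "h ` X1 = X1" by blast
    have hbij: "bij_betw h V V"
      using hiso unfolding graph_iso_def by (rule conjunct1)
    have hE: "\<forall>u\<in>V. \<forall>v\<in>V. E u v = E' (h u) (h v)"
      using hiso unfolding graph_iso_def by (rule conjunct2)
    have hinj: "inj_on h V" using hbij by (rule bij_betw_imp_inj_on)
    have X1V: "X1 \<subseteq> V" unfolding X1_def V_def by auto
    have hV: "\<And>x. x\<in>V \<Longrightarrow> h x \<in> V" by (rule bij_betw_apply[OF hbij])
    have h2: "\<And>x. x<2*m \<Longrightarrow> h (x+2*m) \<ge> 2*m \<and> h (x+2*m) < 4*m"
    proof -
      fix x assume x: "x<2*m"
      have xV: "x + 2*m \<in> V" using x by (simp add: V_def)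
      have "h (x+2*m) \<notin> X1"
      proof
        assume "h (x+2*m) \<in> X1"
        then obtain z where z: "z\<in>X1" "h z = h (x+2*m)" using hX by (metis imageE)
        moreover have "z \<in> V" using z X1V by blast
        ultimately have "z = x + 2*m" using hinj xV inj_onD by metis
        thus False using z by (simp add: X1_def)
      qed
      thus "h (x+2*m) \<ge> 2*m \<and> h (x+2*m) < 4*m" using hV[OF xV] by (auto simp: X1_def V_def)
    qed
    have m2: "2 < 2*m" using m_gt by simp
    have s1aut: "graph_aut {0..<2*m} (mat_graph B) h"
      unfolding graph_aut_def graph_iso_def
    proof
      show "bij_betw h {0..<2 * m} {0..<2 * m}"
        using hX inj_on_subset[OF hinj X1V] unfolding bij_betw_def X1_def by simp
      show "\<forall>u\<in>{0..<2 * m}. \<forall>v\<in>{0..<2 * m}. mat_graph B u v = mat_graph B (h u) (h v)"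
      proof (intro ballI)
        fix u v assume u: "u \<in> {0..<2 * m}" and v: "v \<in> {0..<2 * m}"
        have hu: "h u < 2*m" "h v < 2*m" using hX u v by (auto simp: X1_def)
        have uV: "u\<in>V" "v\<in>V" using u v by (auto simp: V_def)
        have "mat_graph B u v = E u v" using E11 u v by (simp add: mat_graph_def)
        also have "\<dots> = E' (h u) (h v)" using hE uV by blast
        also have "\<dots> = E (h u) (h v)" using sw[OF hV[OF uV(1)] hV[OF uV(2)]] hu by simp
        also have "\<dots> = mat_graph B (h u) (h v)" using E11 hu by (simp add: mat_graph_def)
        finally show "mat_graph B u v = mat_graph B (h u) (h v)" .
      qed
    qed
    define s2 where "s2 = (\<lambda>x. h (x + 2*m) - 2*m)"
    have s2lt: "\<And>x. x<2*m \<Longrightarrow> s2 x < 2*m"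
    proof -
      fix x assume "x<2*m"
      from h2[OF this] show "s2 x < 2*m" unfolding s2_def by arith
    qed
    have s2eq: "\<And>x. x<2*m \<Longrightarrow> h (x+2*m) = s2 x + 2*m"
    proof -
      fix x assume "x<2*m"
      from h2[OF this] show "h (x+2*m) = s2 x + 2*m" unfolding s2_def by arith
    qed
    have s2aut: "graph_aut {0..<2*m} (mat_graph B) s2"
      unfolding graph_aut_def graph_iso_def
    proof
      have inj: "inj_on s2 {0..<2*m}"
      proof (rule inj_onI)
        fix x y assume x: "x \<in> {0..<2*m}" and y: "y \<in> {0..<2*m}" and e: "s2 x = s2 y"
        have "h (x+2*m) = h (y+2*m)" using s2eq x y e by simp
        moreover have "x+2*m \<in> V" "y+2*m \<in> V" using x y by (auto simp: V_def)
        ultimately show "x = y" using hinj by (meson inj_onD add_right_imp_eq)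
      qed
      have "s2 ` {0..<2*m} = {0..<2*m}"
        by (rule endo_inj_surj) (use inj s2lt in auto)
      thus "bij_betw s2 {0..<2 * m} {0..<2 * m}" using inj unfolding bij_betw_def by simp
      show "\<forall>u\<in>{0..<2 * m}. \<forall>v\<in>{0..<2 * m}. mat_graph B u v = mat_graph B (s2 u) (s2 v)"
      proof (intro ballI)
        fix u v assume u: "u \<in> {0..<2 * m}" and v: "v \<in> {0..<2 * m}"
        have uV: "u+2*m\<in>V" "v+2*m\<in>V" using u v by (auto simp: V_def)
        have hu: "s2 u < 2*m" "s2 v < 2*m" using s2lt u v by auto
        have "mat_graph B u v = E (u+2*m) (v+2*m)" using E22 u v by (simp add: mat_graph_def)
        also have "\<dots> = E' (h (u+2*m)) (h (v+2*m))" using hE uV by blast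
        also have "\<dots> = E (s2 u + 2*m) (s2 v + 2*m)"
          using sw[OF hV[OF uV(1)] hV[OF uV(2)]] s2eq u v by simp
        also have "\<dots> = mat_graph B (s2 u) (s2 v)" using E22 hu by (simp add: mat_graph_def)
        finally show "mat_graph B u v = mat_graph B (s2 u) (s2 v)" .
      qed
    qed
    have h0lt: "h 0 < 2*m" using hX m2 by (auto simp: X1_def)
    have m0: "0 < 2*m" using m2 by simp
    have ex1: "\<exists>\<sigma>. graph_aut {0..<2*m} (mat_graph B) \<sigma> \<and> \<sigma> 0 = h 0"
      using s1aut by blast
    have "h 0 = 0 \<or> h 0 = \<rho> 0" using orbits[rule_format, OF m0 h0lt] ex1 by (rule iffD1)
    hence h0: "h 0 div 2 = 0" using rho_div[of 0] m2 by auto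
    have s22: "s2 2 < 2*m" using s2lt m2 by simp
    have ex2: "\<exists>\<sigma>. graph_aut {0..<2*m} (mat_graph B) \<sigma> \<and> \<sigma> 2 = s2 2"
      using s2aut by blast
    have "s2 2 = 2 \<or> s2 2 = \<rho> 2" using orbits[rule_format, OF m2 s22] ex2 by (rule iffD1)
    hence s2d: "s2 2 div 2 = 1" using rho_div[of 2] m2 by auto
    have V0: "0 \<in> V" "2 + 2*m \<in> V" using m2 by (auto simp: V_def)
    have hh1: "E 0 (2+2*m) = E' (h 0) (h (2 + 2*m))" using hE V0 by blast
    have hh2: "h (2 + 2*m) = s2 2 + 2*m" using s2eq[of 2] m2 by simp
    have "E 0 (2+2*m) = E' (h 0) (s2 2 + 2*m)" using hh1 hh2 by simp
    also have "\<dots> = (\<not> E (h 0) (s2 2 + 2*m))"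
      using sw[of "h 0" "s2 2 + 2*m"] h0lt s22 by (simp add: V_def)
    also have "\<dots> = (\<not> N (h 0) (s2 2) = 1)" using E12 h0lt s22 by simp
    also have "\<dots> = (\<not> T 0 1 = 1)" using h0 s2d by (auto simp: Nval)
    finally have "E 0 (2+2*m) = (\<not> T 0 1 = 1)" .
    moreover have "E 0 (2+2*m) = (T 0 1 = 1)" using E12[of 0 2] m2 by (simp add: Nval)
    ultimately show False by simp
  qed
  have "gm_switching_set V E X1 \<and> (\<exists>f. graph_iso V E V E' f) \<and> \<not> (\<exists>f. graph_iso V E V E' f \<and> f ` X1 = X1)"
    using part1 part2 part3 by blast
  thus ?thesis by (simp add: Let_def N_def A_def V_def X1_def E_def E'_def)
qed

end
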